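(* Let $X$ be a finite biquandle, let $D$ be a knotoid diagram in $S^2$ or $\mathbb{R}^2$ with an $X$-coloring $f$, and let $D'$ be obtained from $D$ by a single Reidemeister move performed in a disk disjoint from the endpoints, with $f'$ the unique $X$-coloring of $D'$ agreeing with $f$ outside that disk. Then the biquandle longitude weights agree: $BLW(D'_{f'})=BLW(D_f)$ as bijections $X\to X$.
   Context: A biquandle is a set $X$ together with, for each $b\in X$, two bijections $\alpha_b,\beta_b:X\to X$ such that: (i) $\alpha_a(a)=\beta_a(a)$ for all $a$; (ii) $S(a,b)=(\alpha_a(b),\beta_b(a))$ is an invertible map $X\times X\to X\times X$; (iii) $\alpha_{\alpha_a(b)}\alpha_a=\alpha_{\beta_b(a)}\alpha_b$, $\beta_{\alpha_a(b)}\alpha_a=\alpha_{\beta_b(a)}\beta_b$, $\beta_{\beta_a(b)}\beta_a=\beta_{\alpha_b(a)}\beta_b$ for all $a,b$. A knotoid diagram in $\Sigma=S^2$ or $\mathbb{R}^2$ is a generic immersion of $[0,1]$ with finitely many transverse double points (crossings) with over/under information, oriented from the tail (image of $0$) to the head (image of $1$), these being distinct non-crossing points; Reidemeister moves on knotoid diagrams are the usual three moves performed in disks disjoint from the endpoints. A semiarc is a piece of the curve between consecutive crossings, or between an endpoint and a crossing. Crossings carry the usual sign $\pm 1$. An $X$-coloring of a diagram assigns an element of $X$ to each semiarc such that: at a positive crossing, if the incoming under-semiarc is colored $a$ and the outgoing over-semiarc is colored $b$, then the outgoing under-semiarc is colored $\beta_b(a)$ and the incoming over-semiarc is colored $\alpha_a(b)$;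 at a negative crossing, if the outgoing under-semiarc is colored $a$ and the incoming over-semiarc is colored $b$, then the incoming under-semiarc is colored $\beta_b(a)$ and the outgoing over-semiarc is colored $\alpha_a(b)$. For any Reidemeister move, each coloring before the move extends uniquely to a coloring after the move agreeing outside the disk of the move. Biquandle longitude weight: traveling along the colored diagram $D_f$ from tail to head, each crossing is passed twice. To each pass assign the bijection $\beta_L^{jk}:X\to X$, where $j\in\{\pm1\}$ is the sign of the crossing, $k=1$ if the pass goes under and $k=-1$ if it goes over, and $L\in X$ is the color of the semiarc of the other strand at that crossing which lies to the right of the direction of travel. Then $BLW(D_f)$ is the composition of these bijections in the order they are encountered, the first encountered being applied first (i.e. if the passes give $\beta_{L_1}^{e_1},\dots,\beta_{L_m}^{e_m}$ in order, $BLW(D_f)=\beta_{L_m}^{e_m}\circ\cdots\circ\beta_{L_1}^{e_1}$); for a crossingless diagram it is the identity. *)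

theory Defs
  imports Main
begin

text \<open>A biquandle on a (finite) type 'x.  alpha b and beta b are the bijections
  alpha_b and beta_b, i.e. alpha b x = alpha_b(x).\<close>

definition is_biquandle :: "('x \<Rightarrow> 'x \<Rightarrow> 'x) \<Rightarrow> ('x \<Rightarrow> 'x \<Rightarrow> 'x) \<Rightarrow> bool" where
  "is_biquandle \<alpha> \<beta> \<longleftrightarrow>
     (\<forall>b. bij (\<alpha> b) \<and> bij (\<beta> b)) \<and>
     (\<forall>a. \<alpha> a a = \<beta> a a) \<and>
     bij (\<lambda>(a, b). (\<alpha> a b, \<beta> b a)) \<and>
     (\<forall>a b. \<alpha> (\<alpha> a b) \<circ> \<alpha> a = \<alpha> (\<beta> b a) \<circ> \<alpha> b \<and>
            \<beta> (\<alpha> a b) \<circ> \<alpha> a = \<alpha> (\<beta> b a) \<circ> \<beta> b \<and>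
            \<beta> (\<beta> a b) \<circ> \<beta> a = \<beta> (\<alpha> b a) \<circ> \<beta> b)"

text \<open>A pass of the curve through a crossing: (crossing name, True iff the pass goes over).
  A diagram is the list P of passes from tail to head together with a sign function
  sg (sg c = True iff crossing c is positive).  Semiarc k (0 \<le> k \<le> length P) is the piece
  of the curve between pass k-1 and pass k (semiarc 0 starts at the tail, semiarc length P
  ends at the head).\<close>

type_synonym pass = "nat \<times> bool"

definition wf_diag :: "pass list \<Rightarrow> bool" where
  "wf_diag P \<longleftrightarrow> distinct P \<and> (\<forall>c b. (c, b) \<in> set P \<longrightarrow> (c, \<not> b) \<in> set P)"

text \<open>X-colorings: a list of colors indexed by semiarcs.  For crossing c with under pass at
  position p and over pass at position q: incoming/outgoing under semiarcs are p / p+1,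
  incoming/outgoing over semiarcs are q / q+1.\<close>

definition coloring :: "('x \<Rightarrow> 'x \<Rightarrow> 'x) \<Rightarrow> ('x \<Rightarrow> 'x \<Rightarrow> 'x) \<Rightarrow> pass list \<Rightarrow> (nat \<Rightarrow> bool) \<Rightarrow> 'x list \<Rightarrow> bool" where
  "coloring \<alpha> \<beta> P sg C \<longleftrightarrow> length C = Suc (length P) \<and>
     (\<forall>p q c. p < length P \<longrightarrow> q < length P \<longrightarrow> P ! p = (c, False) \<longrightarrow> P ! q = (c, True) \<longrightarrow>
        (if sg c
         then C ! Suc p = \<beta> (C ! Suc q) (C ! p) \<and> C ! q = \<alpha> (C ! p) (C ! Suc q)
         else C ! p = \<beta> (C ! q) (C ! Suc p) \<and> C ! Suc q = \<alpha> (C ! Suc p) (C ! q)))"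

definition pos_of :: "pass list \<Rightarrow> pass \<Rightarrow> nat" where
  "pos_of P x = (THE i. i < length P \<and> P ! i = x)"

text \<open>With the standard sign convention,
  the semiarc of the other strand to the right of the direction of travel is: when passing
  under a positive crossing, the outgoing over semiarc; under a negative crossing, the incoming
  over semiarc; over a positive crossing, the incoming under semiarc; over a negative crossing,
  the outgoing under semiarc.\<close>

definition pass_map :: "('x \<Rightarrow> 'x \<Rightarrow> 'x) \<Rightarrow> pass list \<Rightarrow> (nat \<Rightarrow> bool) \<Rightarrow> 'x list \<Rightarrow> nat \<Rightarrow> ('x \<Rightarrow> 'x)" where
  "pass_map \<beta> P sg C k =
     (let c = fst (P ! k); ov = snd (P ! k);
          p = pos_of P (c, False); q = pos_of P (c, True)
      in if \<not> ov
         then (if sg c then \<beta> (C ! Suc q) else inv (\<beta> (C ! q)))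
         else (if sg c then inv (\<beta> (C ! p)) else \<beta> (C ! Suc p)))"

definition blw :: "('x \<Rightarrow> 'x \<Rightarrow> 'x) \<Rightarrow> pass list \<Rightarrow> (nat \<Rightarrow> bool) \<Rightarrow> 'x list \<Rightarrow> ('x \<Rightarrow> 'x)" where
  "blw \<beta> P sg C = foldl (\<lambda>acc k. pass_map \<beta> P sg C k \<circ> acc) id [0..<length P]"

text \<open>Each move acts on segments of two consecutive passes, given by their start positions S.
  Semiarc k lies inside the disk of the move iff it lies strictly between the two passes of
  a segment.\<close>

definition seg_pos :: "nat set \<Rightarrow> nat set" where
  "seg_pos S = S \<union> Suc ` S"

definition inside :: "nat set \<Rightarrow> nat \<Rightarrow> bool" where
  "inside S k \<longleftrightarrow> 0 < k \<and> k - 1 \<in> S"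

definition agree_rm :: "pass list \<Rightarrow> 'x list \<Rightarrow> nat set \<Rightarrow> 'x list \<Rightarrow> bool" where
  "agree_rm P C S C' \<longleftrightarrow>
     (\<forall>k \<le> length P. \<not> inside S k \<longrightarrow> C' ! (k - card {j \<in> seg_pos S. j < k}) = C ! k)"

definition sgn_agree :: "pass list \<Rightarrow> (nat \<Rightarrow> bool) \<Rightarrow> (nat \<Rightarrow> bool) \<Rightarrow> bool" where
  "sgn_agree P' sg sg' \<longleftrightarrow> (\<forall>c \<in> fst ` set P'. sg' c = sg c)"

definition R1_reduce :: "pass list \<times> (nat \<Rightarrow> bool) \<times> 'x list \<Rightarrow> pass list \<times> (nat \<Rightarrow> bool) \<times> 'x list \<Rightarrow> bool" where
  "R1_reduce D D' \<longleftrightarrow> (case D of (P, sg, C) \<Rightarrow> case D' of (P', sg', C') \<Rightarrow>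
     (\<exists>i. Suc i < length P \<and> fst (P ! i) = fst (P ! Suc i) \<and>
          P' = nths P (- seg_pos {i}) \<and> sgn_agree P' sg sg' \<and> agree_rm P C {i} C'))"

definition R2_reduce :: "pass list \<times> (nat \<Rightarrow> bool) \<times> 'x list \<Rightarrow> pass list \<times> (nat \<Rightarrow> bool) \<times> 'x list \<Rightarrow> bool" where
  "R2_reduce D D' \<longleftrightarrow> (case D of (P, sg, C) \<Rightarrow> case D' of (P', sg', C') \<Rightarrow>
     (\<exists>i j c d ov. Suc i < j \<and> Suc j < length P \<and> c \<noteq> d \<and>
          P ! i = (c, ov) \<and> P ! Suc i = (d, ov) \<and>
          ((P ! j = (c, \<not> ov) \<and> P ! Suc j = (d, \<not> ov)) \<or> (P ! j = (d, \<not> ov) \<and> P ! Suc j = (c, \<not> ov))) \<and>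
          sg c \<noteq> sg d \<and>
          P' = nths P (- seg_pos {i, j}) \<and> sgn_agree P' sg sg' \<and> agree_rm P C {i, j} C'))"

definition sgn_int :: "bool \<Rightarrow> int" where
  "sgn_int b = (if b then 1 else -1)"

text \<open>R3: top strand segment at t (over at x and y), middle strand segment at m (under at x,
  over at z), bottom strand segment at b (under at y and z).  The move reverses the order of the
  two passes in each segment.  The sign condition characterises exactly the configurations
  realised by three strands bounding a triangle: with s_T, s_M, s_B = +1 iff x (resp. x, y)
  comes first on the top (resp. middle, bottom) segment,
  eps(x) s_T s_M = eps(y) s_T s_B = eps(z) s_M s_B (= orientation of the triangle).\<close>

definition R3_move :: "pass list \<times> (nat \<Rightarrow> bool) \<times> 'x list \<Rightarrow> pass list \<times> (nat \<Rightarrow> bool) \<times> 'x list \<Rightarrow> bool" where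
  "R3_move D D' \<longleftrightarrow> (case D of (P, sg, C) \<Rightarrow> case D' of (P', sg', C') \<Rightarrow>
     (\<exists>t m b x y z. Suc t < length P \<and> Suc m < length P \<and> Suc b < length P \<and>
          {t, Suc t} \<inter> {m, Suc m} = {} \<and> {t, Suc t} \<inter> {b, Suc b} = {} \<and> {m, Suc m} \<inter> {b, Suc b} = {} \<and>
          x \<noteq> y \<and> x \<noteq> z \<and> y \<noteq> z \<and>
          {P ! t, P ! Suc t} = {(x, True), (y, True)} \<and>
          {P ! m, P ! Suc m} = {(x, False), (z, True)} \<and>
          {P ! b, P ! Suc b} = {(y, False), (z, False)} \<and>
          (let sT = sgn_int (P ! t = (x, True)); sM = sgn_int (P ! m = (x, False));
               sB = sgn_int (P ! b = (y, False))
           in sgn_int (sg x) * sT * sM = sgn_int (sg y) * sT * sB \<and>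
              sgn_int (sg y) * sT * sB = sgn_int (sg z) * sM * sB) \<and>
          length P' = length P \<and>
          (\<forall>k < length P. P' ! k = (if k \<in> {t, m, b} then P ! Suc k
                                    else if 0 < k \<and> k - 1 \<in> {t, m, b} then P ! (k - 1)
                                    else P ! k)) \<and>
          sgn_agree P' sg sg' \<and>
          (\<forall>k \<le> length P. \<not> inside {t, m, b} k \<longrightarrow> C' ! k = C ! k)))"

definition reid_move :: "pass list \<times> (nat \<Rightarrow> bool) \<times> 'x list \<Rightarrow> pass list \<times> (nat \<Rightarrow> bool) \<times> 'x list \<Rightarrow> bool" where
  "reid_move D D' \<longleftrightarrow>
     R1_reduce D D' \<or> R1_reduce D' D \<or> R2_reduce D D' \<or> R2_reduce D' D \<or> R3_move D D' \<or> R3_move D' D"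

end

theory Submission
  imports Defs
begin


definition compl :: "('a \<Rightarrow> 'a) list \<Rightarrow> 'a \<Rightarrow> 'a" where
  "compl fs = foldl (\<lambda>acc f. f \<circ> acc) id fs"

lemma foldl_comp_gen: fixes a :: "'a \<Rightarrow> 'a" shows "foldl (\<lambda>acc f. f \<circ> acc) a ys = compl ys \<circ> a"
  unfolding compl_def
proof (induction ys arbitrary: a)
  case Nil then show ?case by simp
next
  case (Cons y ys)
  have 1: "foldl (\<lambda>acc f. f \<circ> acc) a (y # ys) = foldl (\<lambda>acc f. f \<circ> acc) (y \<circ> a) ys" by simp
  have 2: "foldl (\<lambda>acc f. f \<circ> acc) (y \<circ> a) ys = foldl (\<lambda>acc f. f \<circ> acc) id ys \<circ> (y \<circ> a)" by (rule Cons.IH)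
  have 3: "foldl (\<lambda>acc f. f \<circ> acc) id (y # ys) = foldl (\<lambda>acc f. f \<circ> acc) id ys \<circ> y"
    using Cons.IH[of y] by (simp only: foldl_Cons id_o o_id)
  show ?case unfolding 1 2 3 by (rule o_assoc)
qed

lemma compl_append: "compl (xs @ ys) = compl ys \<circ> compl xs"
proof -
  have "compl (xs @ ys) = foldl (\<lambda>acc f. f \<circ> acc) (compl xs) ys" by (simp add: compl_def)
  then show ?thesis by (simp only: foldl_comp_gen)
qed

lemma compl_Cons: "compl (x # xs) = compl xs \<circ> x"
  using compl_append[of "[x]" xs] by (simp add: compl_def)

lemma compl_Nil[simp]: "compl [] = id" by (simp add: compl_def)

lemma blw_compl: "blw \<beta> P sg C = compl (map (pass_map \<beta> P sg C) [0..<length P])"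
  by (simp add: blw_def compl_def foldl_map)

lemma pos_of_eq: "distinct P \<Longrightarrow> i < length P \<Longrightarrow> P ! i = a \<Longrightarrow> pos_of P a = i"
  unfolding pos_of_def
  by (rule the_equality) (auto simp: nth_eq_iff_index_eq)
lemma pass_map_eq:
  assumes "distinct P" "k < length P" "P ! k = (c, ov)" "p < length P" "P ! p = (c, False)"
    "q < length P" "P ! q = (c, True)"
  shows "pass_map \<beta> P sg C k = (if \<not> ov then (if sg c then \<beta> (C ! Suc q) else inv (\<beta> (C ! q)))
                                  else (if sg c then inv (\<beta> (C ! p)) else \<beta> (C ! Suc p)))"
proof -
  have "pos_of P (c, False) = p" "pos_of P (c, True) = q" using pos_of_eq assms by blast+
  then show ?thesis unfolding pass_map_def Let_def assms(3) fst_conv snd_conv by simp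
qed

lemma col_at:
  assumes "coloring \<alpha> \<beta> P sg C" "p < length P" "q < length P" "P ! p = (c, False)" "P ! q = (c, True)"
  shows "if sg c
         then C ! Suc p = \<beta> (C ! Suc q) (C ! p) \<and> C ! q = \<alpha> (C ! p) (C ! Suc q)
         else C ! p = \<beta> (C ! q) (C ! Suc p) \<and> C ! Suc q = \<alpha> (C ! Suc p) (C ! q)"
  using assms unfolding coloring_def by blast

lemma wf_partner: assumes "wf_diag P" "(c, b) \<in> set P" shows "(c, \<not> b) \<in> set P"
proof -
  have "\<forall>c b. (c, b) \<in> set P \<longrightarrow> (c, \<not> b) \<in> set P" using assms(1) unfolding wf_diag_def by (rule conjunct2)
  then show ?thesis using assms(2) by blast
qed
lemma wf_distinct: "wf_diag P \<Longrightarrow> distinct P" unfolding wf_diag_def by (rule conjunct1)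

lemma pm_transfer:
  assumes wf: "wf_diag P" "wf_diag P'" and k: "k' < length P'" "k < length P" "P' ! k' = P ! k"
    and hC: "\<And>p' b. p' < length P' \<Longrightarrow> P' ! p' = (fst (P ! k), b) \<Longrightarrow>
              \<exists>p<length P. P ! p = (fst (P ! k), b) \<and> C' ! p' = C ! p \<and> C' ! Suc p' = C ! Suc p"
    and sgc: "sg' (fst (P ! k)) = sg (fst (P ! k))"
  shows "pass_map \<beta> P' sg' C' k' = pass_map \<beta> P sg C k"
proof -
  obtain c ov where cov: "P ! k = (c, ov)" by (cases "P ! k")
  have d: "distinct P" "distinct P'" using wf by (simp_all add: wf_distinct)
  have "(c, ov) \<in> set P'" using nth_mem[OF k(1)] k(3) cov by simp
  moreover have "(c, \<not> ov) \<in> set P'" using calculation wf(2) by (rule wf_partner[rotated])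
  ultimately have "(c, False) \<in> set P' \<and> (c, True) \<in> set P'" by (cases ov) auto
  then have i1: "(c, False) \<in> set P'" and i2: "(c, True) \<in> set P'" by auto
  from i1 obtain p' where pq1: "p' < length P'" "P' ! p' = (c, False)" by (auto simp: in_set_conv_nth)
  from i2 obtain q' where pq2: "q' < length P'" "P' ! q' = (c, True)" by (auto simp: in_set_conv_nth)
  note pq = pq1 pq2
  have fk: "fst (P ! k) = c" using cov by simp
  obtain p where p: "p < length P" "P ! p = (c, False)" "C' ! p' = C ! p" "C' ! Suc p' = C ! Suc p"
    using hC[of p' False] pq1 unfolding fk by blast
  obtain q where q: "q < length P" "P ! q = (c, True)" "C' ! q' = C ! q" "C' ! Suc q' = C ! Suc q"
    using hC[of q' True] pq2 unfolding fk by blast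
  have kk: "P' ! k' = (c, ov)" using k(3) cov by simp
  have e1: "pass_map \<beta> P' sg' C' k' = (if \<not> ov then (if sg' c then \<beta> (C' ! Suc q') else inv (\<beta> (C' ! q')))
                                  else (if sg' c then inv (\<beta> (C' ! p')) else \<beta> (C' ! Suc p')))"
    by (rule pass_map_eq[OF d(2) k(1) kk pq, where \<beta>=\<beta> and sg=sg' and C=C'])
  have e2: "pass_map \<beta> P sg C k = (if \<not> ov then (if sg c then \<beta> (C ! Suc q) else inv (\<beta> (C ! q)))
                                  else (if sg c then inv (\<beta> (C ! p)) else \<beta> (C ! Suc p)))"
    by (rule pass_map_eq[OF d(1) k(2) cov p(1,2) q(1,2), where \<beta>=\<beta> and sg=sg and C=C])
  have sc: "sg' c = sg c" using sgc cov by simp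
  show ?thesis by (simp only: e1 e2 sc p(3) p(4) q(3) q(4))
qed



lemma bij_inv_comp: "bij f \<Longrightarrow> inv f \<circ> f = id"
  by (simp add: bij_is_inj)
lemma bij_comp_inv: "bij f \<Longrightarrow> f \<circ> inv f = id"
  using bij_is_surj surj_iff by blast

lemma take_drop2: "Suc i < length xs \<Longrightarrow> xs = take i xs @ [xs ! i, xs ! Suc i] @ drop (Suc (Suc i)) xs"
proof -
  assume a: "Suc i < length xs"
  have "drop i xs = xs ! i # drop (Suc i) xs" using a by (simp add: Cons_nth_drop_Suc)
  moreover have "drop (Suc i) xs = xs ! Suc i # drop (Suc (Suc i)) xs" using a by (simp add: Cons_nth_drop_Suc)
  ultimately have "drop i xs = [xs ! i, xs ! Suc i] @ drop (Suc (Suc i)) xs" by simp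
  then show ?thesis by (metis append_take_drop_id)
qed

lemma compl_pair_id:
  assumes "Suc i < length fs" "fs ! Suc i \<circ> fs ! i = id"
  shows "compl fs = compl (take i fs @ drop (Suc (Suc i)) fs)"
proof -
  have "compl fs = compl (take i fs @ [fs ! i, fs ! Suc i] @ drop (Suc (Suc i)) fs)"
    using take_drop2[OF assms(1)] by simp
  also have "\<dots> = compl (drop (Suc (Suc i)) fs) \<circ> (fs ! Suc i \<circ> fs ! i) \<circ> compl (take i fs)"
    by (simp add: compl_append compl_Cons o_assoc)
  also have "\<dots> = compl (take i fs @ drop (Suc (Suc i)) fs)"
    using assms(2) by (simp add: compl_append)
  finally show ?thesis .
qed

lemma nths_del2: "nths (A @ [a, b] @ B) (- {length A, Suc (length A)}) = A @ B"
proof -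
  have 1: "nths A (- {length A, Suc (length A)}) = A" by (rule nths_all) auto
  show ?thesis by (simp add: nths_append 1 nths_Cons, rule nths_all, auto)
qed



lemma R1_case:
  assumes bijb: "\<forall>b. bij (\<beta> b)" and wf: "wf_diag P" "wf_diag P'"
    and R: "R1_reduce (P, sg, C) (P', sg', C')"
  shows "blw \<beta> P' sg' C' = blw \<beta> P sg C"
proof -
  from R obtain i where i: "Suc i < length P" "fst (P ! i) = fst (P ! Suc i)"
    and P': "P' = nths P (- seg_pos {i})" and sa: "sgn_agree P' sg sg'" and ag: "agree_rm P C {i} C'"
    unfolding R1_reduce_def by auto
  define A where "A = take i P"
  define B where "B = drop (Suc (Suc i)) P"
  have lenA: "length A = i" using i(1) by (simp add: A_def)
  have Pdec: "P = A @ [P ! i, P ! Suc i] @ B" using take_drop2[OF i(1)] by (simp add: A_def B_def)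
  have P'eq: "P' = A @ B"
  proof -
    have sp: "seg_pos {i} = {length A, Suc (length A)}" by (auto simp: seg_pos_def lenA)
    have "P' = nths (A @ [P ! i, P ! Suc i] @ B) (- {length A, Suc (length A)})"
      unfolding P' sp by (subst Pdec) (rule refl)
    then show ?thesis by (simp only: nths_del2)
  qed
  have lenP': "length P' = length P - 2" using arg_cong[OF Pdec, of length] P'eq by simp
  define e where "e k = (if k < i then k else Suc (Suc k))" for k
  have Pe: "e k < length P \<and> P' ! k = P ! e k" if "k < length P'" for k
  proof (cases "k < i")
    case True
    then show ?thesis using that P'eq lenA i(1) by (simp add: e_def nth_append A_def)
  next
    case False
    have "P' ! k = B ! (k - i)" using False P'eq lenA by (simp add: nth_append)
    moreover have "P ! Suc (Suc k) = B ! (k - i)" using False i(1) that lenP' by (simp add: B_def)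
    ultimately show ?thesis using False that lenP' by (simp add: e_def)
  qed
  have cnt: "card {j \<in> seg_pos {i}. j < k} = (if k \<le> i then 0 else if k = Suc i then 1 else 2)" for k
  proof -
    have "{j \<in> seg_pos {i}. j < k} = (if k \<le> i then {} else if k = Suc i then {i} else {i, Suc i})"
      by (auto simp: seg_pos_def)
    then show ?thesis by simp
  qed
  have agk: "C' ! (k - card {j \<in> seg_pos {i}. j < k}) = C ! k" if "k \<le> length P" "k \<noteq> Suc i" for k
  proof -
    have "\<not> inside {i} k" using that by (auto simp: inside_def)
    then show ?thesis using ag that unfolding agree_rm_def by blast
  qed
  have Ce: "C' ! k = C ! e k" if "k \<le> length P'" for k
  proof (cases "k < i")
    case True then show ?thesis using agk[of k] that lenP' i(1) cnt[of k] by (simp add: e_def)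
  next
    case False then show ?thesis using agk[of "Suc (Suc k)"] that lenP' i(1) cnt[of "Suc (Suc k)"] by (simp add: e_def)
  qed
  have Cii: "C ! i = C ! Suc (Suc i)"
    using agk[of i] agk[of "Suc (Suc i)"] i(1) cnt[of i] cnt[of "Suc (Suc i)"] by simp
  have CeS: "C' ! Suc k = C ! Suc (e k)" if "k < length P'" for k
  proof -
    have "C' ! Suc k = C ! e (Suc k)" using Ce[of "Suc k"] that by simp
    then show ?thesis using Cii by (cases "Suc k < i"; cases "Suc k = i"; simp add: e_def)
  qed
  have pm: "pass_map \<beta> P' sg' C' k = pass_map \<beta> P sg C (e k)" if "k < length P'" for k
  proof (rule pm_transfer[OF wf that])
    show "e k < length P" "P' ! k = P ! e k" using Pe[OF that] by auto
    show "\<exists>p<length P. P ! p = (fst (P ! e k), b) \<and> C' ! p' = C ! p \<and> C' ! Suc p' = C ! Suc p"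
      if "p' < length P'" "P' ! p' = (fst (P ! e k), b)" for p' b
      using that Pe[OF that(1)] Ce[of p'] CeS[OF that(1)] by (intro exI[of _ "e p'"]) auto
    have "fst (P ! e k) \<in> fst ` set P'" using Pe[OF that] that by (metis image_eqI nth_mem)
    then show "sg' (fst (P ! e k)) = sg (fst (P ! e k))" using sa unfolding sgn_agree_def by blast
  qed
  define fs where "fs = map (pass_map \<beta> P sg C) [0..<length P]"
  have lfs: "length fs = length P" by (simp add: fs_def)
  have map': "map (pass_map \<beta> P' sg' C') [0..<length P'] = take i fs @ drop (Suc (Suc i)) fs"
  proof (rule nth_equalityI)
    show "length (map (pass_map \<beta> P' sg' C') [0..<length P']) = length (take i fs @ drop (Suc (Suc i)) fs)"
      using lfs lenP' i(1) by simp
    fix k assume "k < length (map (pass_map \<beta> P' sg' C') [0..<length P'])"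
    then have k: "k < length P'" by simp
    show "map (pass_map \<beta> P' sg' C') [0..<length P'] ! k = (take i fs @ drop (Suc (Suc i)) fs) ! k"
      using pm[OF k] k lfs lenP' i(1) Pe[OF k] by (cases "k < i") (auto simp: nth_append fs_def e_def)
  qed
  have pair: "fs ! Suc i \<circ> fs ! i = id"
  proof -
    obtain c ov where cov: "P ! i = (c, ov)" by (cases "P ! i")
    have d: "distinct P" using wf(1) by (rule wf_distinct)
    have "P ! Suc i \<noteq> P ! i" using d i(1) by (simp add: nth_eq_iff_index_eq)
    then have cov2: "P ! Suc i = (c, \<not> ov)" using i(2) cov by (cases "P ! Suc i") auto
    have f1: "fs ! i = pass_map \<beta> P sg C i" "fs ! Suc i = pass_map \<beta> P sg C (Suc i)"
      using i(1) by (simp_all add: fs_def)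
    have i0: "i < length P" using i(1) by simp
    show ?thesis
    proof (cases ov)
      case False
      have h1: "P ! i = (c, False)" "P ! Suc i = (c, True)" using cov cov2 False by simp_all
      show ?thesis unfolding f1
        pass_map_eq[OF d i0 cov i0 h1(1) i(1) h1(2)] pass_map_eq[OF d i(1) cov2 i0 h1(1) i(1) h1(2)]
        using False bijb Cii by (simp add: bij_inv_comp bij_comp_inv)
    next
      case True
      have h1: "P ! Suc i = (c, False)" "P ! i = (c, True)" using cov cov2 True by simp_all
      show ?thesis unfolding f1
        pass_map_eq[OF d i0 cov i(1) h1(1) i0 h1(2)] pass_map_eq[OF d i(1) cov2 i(1) h1(1) i0 h1(2)]
        using True bijb Cii by (simp add: bij_inv_comp bij_comp_inv)
    qed
  qed
  show ?thesis unfolding blw_compl map' fs_def[symmetric]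
    using compl_pair_id[OF _ pair] lfs i(1) by simp
qed



lemma nths_del4:
  "nths (A @ [a, b] @ B @ [c, d] @ D)
     (- {length A, Suc (length A), length A + 2 + length B, Suc (length A + 2 + length B)}) = A @ B @ D"
proof -
  let ?X = "- {length A, Suc (length A), length A + 2 + length B, Suc (length A + 2 + length B)}"
  have 1: "nths A ?X = A" by (rule nths_all) auto
  have n1: "nths B {j. j \<noteq> length B \<and> j \<noteq> Suc (length B)} = B" by (rule nths_all) auto
  have n2: "nths D UNIV = D" by (rule nths_all) auto
  show ?thesis
    apply (simp only: nths_append 1)
    apply (simp add: nths_Cons)
    apply (simp add: nths_append nths_Cons n1 n2)
    done
qed


lemma R2_case:
  assumes bijb: "\<forall>b. bij (\<beta> b)" and wf: "wf_diag P" "wf_diag P'"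
    and R: "R2_reduce (P, sg, C) (P', sg', C')"
  shows "blw \<beta> P' sg' C' = blw \<beta> P sg C"
proof -
  from R obtain i j c d ov where ij: "Suc i < j" "Suc j < length P" and cd: "c \<noteq> d"
    and hi: "P ! i = (c, ov)" "P ! Suc i = (d, ov)"
    and hj0: "(P ! j = (c, \<not> ov) \<and> P ! Suc j = (d, \<not> ov)) \<or> (P ! j = (d, \<not> ov) \<and> P ! Suc j = (c, \<not> ov))"
    and sgcd: "sg c \<noteq> sg d"
    and P': "P' = nths P (- seg_pos {i, j})" and sa: "sgn_agree P' sg sg'" and ag: "agree_rm P C {i, j} C'"
    unfolding R2_reduce_def by blast
  have li: "i < length P" and lSi: "Suc i < length P" and lj: "j < length P" and lSj: "Suc j < length P"
    using ij by auto
  define A where "A = take i P"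
  define Q where "Q = drop (Suc (Suc i)) P"
  define B where "B = take (j - Suc (Suc i)) Q"
  define D where "D = drop (Suc (Suc j)) P"
  have lenA: "length A = i" using ij by (simp add: A_def)
  have lenB: "length B = j - Suc (Suc i)" using ij by (simp add: B_def Q_def)
  have P1: "P = A @ [P ! i, P ! Suc i] @ Q" using take_drop2[OF lSi] by (simp add: A_def Q_def)
  have jj: "Suc (Suc (j - 2)) = j" using ij by arith
  have Q1: "Q = B @ [P ! j, P ! Suc j] @ D"
  proof -
    have a: "Suc (j - Suc (Suc i)) < length Q" using ij by (simp add: Q_def)
    have "Q ! (j - Suc (Suc i)) = P ! j" "Q ! Suc (j - Suc (Suc i)) = P ! Suc j"
      "drop (Suc (Suc (j - Suc (Suc i)))) Q = D" using ij by (simp_all add: Q_def D_def Suc_diff_Suc jj)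
    then show ?thesis using take_drop2[OF a] by (simp add: B_def)
  qed
  have Pdec: "P = A @ [P ! i, P ! Suc i] @ B @ [P ! j, P ! Suc j] @ D" using P1 Q1 by simp
  have P'eq: "P' = A @ B @ D"
  proof -
    have sp: "seg_pos {i, j} = {length A, Suc (length A), length A + 2 + length B, Suc (length A + 2 + length B)}"
      using lenA lenB ij by (auto simp: seg_pos_def)
    have "P' = nths (A @ [P ! i, P ! Suc i] @ B @ [P ! j, P ! Suc j] @ D)
       (- {length A, Suc (length A), length A + 2 + length B, Suc (length A + 2 + length B)})"
      unfolding P' sp by (subst Pdec) (rule refl)
    then show ?thesis by (simp only: nths_del4)
  qed
  have lenP: "length P = length A + length B + length D + 4" using arg_cong[OF Pdec, of length] by simp
  have lenP': "length P' = length P - 4" using P'eq lenP by simp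
  define e where "e k = (if k < i then k else if k < j - 2 then Suc (Suc k) else Suc (Suc (Suc (Suc k))))" for k
  have Pe: "e k < length P \<and> P' ! k = P ! e k" if "k < length P'" for k
  proof -
    consider "k < i" | "i \<le> k" "k < j - 2" | "j - 2 \<le> k" by linarith
    then show ?thesis
    proof cases
      case 1 then show ?thesis using that P'eq lenA ij by (simp add: e_def nth_append A_def)
    next
      case 2
      have kb: "k - i < length B" using 2 lenB ij by arith
      have "P' ! k = B ! (k - i)" using 2 P'eq lenA kb by (simp add: nth_append)
      moreover have "P ! Suc (Suc k) = B ! (k - i)" using 2 ij that lenP' by (simp add: B_def Q_def)
      ultimately show ?thesis using 2 that lenP' by (simp add: e_def)
    next
      case 3
      have kb: "\<not> k < i" "\<not> k - i < length B" "k - i - length B = k - (j - 2)" using 3 lenB ij by arith+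
      have "P' ! k = D ! (k - (j - 2))" using 3 P'eq lenA kb by (simp add: nth_append)
      moreover have "P ! (Suc (Suc (Suc (Suc k)))) = D ! (k - (j - 2))" using 3 ij that lenP' by (simp add: D_def)
      moreover have "\<not> k < i" "\<not> k < j - 2" "Suc (Suc (Suc (Suc k))) < length P" using 3 that lenP' ij by arith+
      ultimately show ?thesis by (simp add: e_def)
    qed
  qed
  have cnt: "card {x \<in> seg_pos {i, j}. x < k} = (if k \<le> i then 0 else if k = Suc i then 1 else if k \<le> j then 2
      else if k = Suc j then 3 else 4)" for k
  proof -
    have "{x \<in> seg_pos {i, j}. x < k} = (if k \<le> i then {} else if k = Suc i then {i} else if k \<le> j then {i, Suc i}
       else if k = Suc j then {i, Suc i, j} else {i, Suc i, j, Suc j})"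
      using ij by (auto simp: seg_pos_def)
    then show ?thesis using ij by simp
  qed
  have agk: "C' ! (k - card {x \<in> seg_pos {i, j}. x < k}) = C ! k" if "k \<le> length P" "k \<noteq> Suc i" "k \<noteq> Suc j" for k
  proof -
    have "\<not> inside {i, j} k" using that by (auto simp: inside_def)
    then show ?thesis using ag that unfolding agree_rm_def by blast
  qed
  have Ce: "C' ! k = C ! e k" if "k \<le> length P'" for k
  proof -
    consider "k < i" | "i \<le> k" "k < j - 2" | "j - 2 \<le> k" by linarith
    then show ?thesis
    proof cases
      case 1
      have a: "k \<le> length P" "k \<noteq> Suc i" "k \<noteq> Suc j" "k \<le> i" using 1 that lenP' ij by arith+
      show ?thesis using agk[OF a(1-3)] cnt[of k] a 1 by (simp add: e_def)
    next
      case 2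
      let ?k = "Suc (Suc k)"
      have a: "?k \<le> length P" "?k \<noteq> Suc i" "?k \<noteq> Suc j" "\<not> ?k \<le> i" "?k \<le> j" "\<not> k < i" "k < j - 2"
        using 2 that lenP' ij by arith+
      show ?thesis using agk[OF a(1-3)] cnt[of ?k] a by (simp add: e_def)
    next
      case 3
      let ?k = "Suc (Suc (Suc (Suc k)))"
      have a: "?k \<le> length P" "?k \<noteq> Suc i" "?k \<noteq> Suc j" "\<not> ?k \<le> i" "\<not> ?k \<le> j" "\<not> k < i" "\<not> k < j - 2"
        using 3 that lenP' ij by arith+
      show ?thesis using agk[OF a(1-3)] cnt[of ?k] a by (simp add: e_def)
    qed
  qed
  have Cii: "C ! i = C ! Suc (Suc i)"
    using agk[of i] agk[of "Suc (Suc i)"] ij cnt[of i] cnt[of "Suc (Suc i)"] by simp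
  have Cjj: "C ! j = C ! Suc (Suc j)"
    using agk[of j] agk[of "Suc (Suc j)"] ij cnt[of j] cnt[of "Suc (Suc j)"] by simp
  have CeS: "C' ! Suc k = C ! Suc (e k)" if "k < length P'" for k
  proof -
    have "C' ! Suc k = C ! e (Suc k)" using Ce[of "Suc k"] that by simp
    moreover have "C ! e (Suc k) = C ! Suc (e k)"
    proof -
      consider "Suc k < i" | "Suc k = i" | "i \<le> k" "Suc k < j - 2" | "i \<le> k" "Suc k = j - 2" | "j - 2 \<le> k" by linarith
      then show ?thesis
      proof cases
        case 2
        show ?thesis
        proof (cases "j = Suc (Suc i)")
          case True then show ?thesis using 2 Cii Cjj by (simp add: e_def)
        next
          case False
          have "i < j - 2" using False ij by arith
          then show ?thesis using 2 Cii ij by (simp add: e_def)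
        qed
      next
        case 4 then show ?thesis using Cjj ij jj by (simp add: e_def)
      qed (use ij in \<open>auto simp: e_def\<close>)
    qed
    ultimately show ?thesis by simp
  qed
  have pm: "pass_map \<beta> P' sg' C' k = pass_map \<beta> P sg C (e k)" if "k < length P'" for k
  proof (rule pm_transfer[OF wf that])
    show "e k < length P" "P' ! k = P ! e k" using Pe[OF that] by auto
    show "\<exists>p<length P. P ! p = (fst (P ! e k), b) \<and> C' ! p' = C ! p \<and> C' ! Suc p' = C ! Suc p"
      if "p' < length P'" "P' ! p' = (fst (P ! e k), b)" for p' b
      using that Pe[OF that(1)] Ce[of p'] CeS[OF that(1)] by (intro exI[of _ "e p'"]) auto
    have "fst (P ! e k) \<in> fst ` set P'" using Pe[OF that] that by (metis image_eqI nth_mem)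
    then show "sg' (fst (P ! e k)) = sg (fst (P ! e k))" using sa unfolding sgn_agree_def by blast
  qed
  define fs where "fs = map (pass_map \<beta> P sg C) [0..<length P]"
  define fs' where "fs' = take j fs @ drop (Suc (Suc j)) fs"
  have lfs: "length fs = length P" by (simp add: fs_def)
  have lfs': "length fs' = length P - 2" using lfs ij by (simp add: fs'_def)
  have map': "map (pass_map \<beta> P' sg' C') [0..<length P'] = take i fs' @ drop (Suc (Suc i)) fs'"
  proof (rule nth_equalityI)
    show "length (map (pass_map \<beta> P' sg' C') [0..<length P']) = length (take i fs' @ drop (Suc (Suc i)) fs')"
      using lfs' lenP' ij by simp
    fix k assume "k < length (map (pass_map \<beta> P' sg' C') [0..<length P'])"
    then have k: "k < length P'" by simp
    show "map (pass_map \<beta> P' sg' C') [0..<length P'] ! k = (take i fs' @ drop (Suc (Suc i)) fs') ! k"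
      using pm[OF k] k lfs lfs' lenP' ij Pe[OF k]
      by (cases "k < i"; cases "Suc (Suc k) < j") (auto simp: nth_append fs_def fs'_def e_def)
  qed
  have f1: "fs ! i = pass_map \<beta> P sg C i" "fs ! Suc i = pass_map \<beta> P sg C (Suc i)"
    "fs ! j = pass_map \<beta> P sg C j" "fs ! Suc j = pass_map \<beta> P sg C (Suc j)"
    using ij by (simp_all add: fs_def)
  have d: "distinct P" using wf(1) by (rule wf_distinct)
  define ord where "ord = (P ! j = (c, \<not> ov))"
  have ordd: "if ord then P ! j = (c, \<not> ov) \<and> P ! Suc j = (d, \<not> ov) else P ! j = (d, \<not> ov) \<and> P ! Suc j = (c, \<not> ov)"
    using hj0 cd unfolding ord_def by auto
  have pairs: "fs ! Suc i \<circ> fs ! i = id \<and> fs ! Suc j \<circ> fs ! j = id"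
  proof -
    have sgd: "sg d = (\<not> sg c)" using sgcd by auto
    have pp0: "fs ! Suc i \<circ> fs ! i = id \<and> fs ! Suc j \<circ> fs ! j = id" if "ov = False" "ord = True"
    proof -
      have h: "P ! i = (c, False)" "P ! Suc i = (d, False)" "P ! j = (c, True)" "P ! Suc j = (d, True)"
        using that hi ordd by auto
      show ?thesis unfolding f1
        pass_map_eq[OF d li h(1) li h(1) lj h(3)]
        pass_map_eq[OF d lSi h(2) lSi h(2) lSj h(4)]
        pass_map_eq[OF d lj h(3) li h(1) lj h(3)]
        pass_map_eq[OF d lSj h(4) lSi h(2) lSj h(4)]
        using sgd bijb Cii Cjj by (cases "sg c") (simp_all add: bij_inv_comp bij_comp_inv)
    qed
    have pp1: "fs ! Suc i \<circ> fs ! i = id \<and> fs ! Suc j \<circ> fs ! j = id" if "ov = False" "ord = False"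
    proof -
      have h: "P ! i = (c, False)" "P ! Suc i = (d, False)" "P ! j = (d, True)" "P ! Suc j = (c, True)"
        using that hi ordd by auto
      show ?thesis unfolding f1
        pass_map_eq[OF d li h(1) li h(1) lSj h(4)]
        pass_map_eq[OF d lSi h(2) lSi h(2) lj h(3)]
        pass_map_eq[OF d lj h(3) lSi h(2) lj h(3)]
        pass_map_eq[OF d lSj h(4) li h(1) lSj h(4)]
        using sgd bijb Cii Cjj by (cases "sg c") (simp_all add: bij_inv_comp bij_comp_inv)
    qed
    have pp2: "fs ! Suc i \<circ> fs ! i = id \<and> fs ! Suc j \<circ> fs ! j = id" if "ov = True" "ord = True"
    proof -
      have h: "P ! i = (c, True)" "P ! Suc i = (d, True)" "P ! j = (c, False)" "P ! Suc j = (d, False)"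
        using that hi ordd by auto
      show ?thesis unfolding f1
        pass_map_eq[OF d li h(1) lj h(3) li h(1)]
        pass_map_eq[OF d lSi h(2) lSj h(4) lSi h(2)]
        pass_map_eq[OF d lj h(3) lj h(3) li h(1)]
        pass_map_eq[OF d lSj h(4) lSj h(4) lSi h(2)]
        using sgd bijb Cii Cjj by (cases "sg c") (simp_all add: bij_inv_comp bij_comp_inv)
    qed
    have pp3: "fs ! Suc i \<circ> fs ! i = id \<and> fs ! Suc j \<circ> fs ! j = id" if "ov = True" "ord = False"
    proof -
      have h: "P ! i = (c, True)" "P ! Suc i = (d, True)" "P ! j = (d, False)" "P ! Suc j = (c, False)"
        using that hi ordd by auto
      show ?thesis unfolding f1
        pass_map_eq[OF d li h(1) lSj h(4) li h(1)]
        pass_map_eq[OF d lSi h(2) lj h(3) lSi h(2)]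
        pass_map_eq[OF d lj h(3) lj h(3) lSi h(2)]
        pass_map_eq[OF d lSj h(4) lSj h(4) li h(1)]
        using sgd bijb Cii Cjj by (cases "sg c") (simp_all add: bij_inv_comp bij_comp_inv)
    qed
    show ?thesis using pp0 pp1 pp2 pp3 by (cases ov; cases ord) auto
  qed
  have "compl fs = compl fs'" unfolding fs'_def using compl_pair_id[of j fs] pairs lfs ij by simp
  also have "\<dots> = compl (take i fs' @ drop (Suc (Suc i)) fs')"
  proof (rule compl_pair_id)
    show "Suc i < length fs'" using lfs' ij by simp
    have "fs' ! i = fs ! i" "fs' ! Suc i = fs ! Suc i" using ij lfs by (simp_all add: fs'_def nth_append)
    then show "fs' ! Suc i \<circ> fs' ! i = id" using pairs by simp
  qed
  finally show ?thesis unfolding blw_compl map' fs_def[symmetric] by simp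
qed



lemma compl_pairs_eq:
  assumes len: "length gs = length fs"
    and Tin: "\<And>s. s \<in> T \<Longrightarrow> Suc s < length fs"
    and Tdisj: "\<And>s. s \<in> T \<Longrightarrow> Suc s \<notin> T"
    and outside: "\<And>k. k < length fs \<Longrightarrow> k \<notin> T \<Longrightarrow> (k = 0 \<or> k - 1 \<notin> T) \<Longrightarrow> gs ! k = fs ! k"
    and pair: "\<And>s. s \<in> T \<Longrightarrow> gs ! Suc s \<circ> gs ! s = fs ! Suc s \<circ> fs ! s"
  shows "compl gs = compl fs"
proof -
  have main: "n \<le> length fs \<longrightarrow> (n = 0 \<or> n - 1 \<notin> T) \<longrightarrow> compl (take n gs) = compl (take n fs)" for n
  proof (induction n rule: less_induct)
    case (less n)
    show ?case
    proof (intro impI)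
      assume n: "n \<le> length fs" and nT: "n = 0 \<or> n - 1 \<notin> T"
      show "compl (take n gs) = compl (take n fs)"
      proof (cases n)
        case 0 then show ?thesis by simp
      next
        case (Suc k)
        have kT: "k \<notin> T" using nT Suc by simp
        have kl: "k < length fs" using n Suc by simp
        show ?thesis
        proof (cases "k = 0 \<or> k - 1 \<notin> T")
          case True
          have ih: "compl (take k gs) = compl (take k fs)" using less.IH[of k] Suc n True by (cases "k = 0") auto
          have "take n gs = take k gs @ [gs ! k]" "take n fs = take k fs @ [fs ! k]"
            using Suc kl len by (simp_all add: take_Suc_conv_app_nth)
          then show ?thesis using ih outside[OF kl kT True] by (simp add: compl_append compl_Cons)
        next
          case False
          then obtain s where s: "k = Suc s" "s \<in> T" by (cases k) auto
          have sT: "s = 0 \<or> s - 1 \<notin> T" using Tdisj s by (cases s) auto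
          have ih: "compl (take s gs) = compl (take s fs)" using less.IH[of s] Suc n s sT by (cases "s = 0") auto
          have "take n gs = take s gs @ [gs ! s, gs ! Suc s]" "take n fs = take s fs @ [fs ! s, fs ! Suc s]"
            using Suc s kl len by (simp_all add: take_Suc_conv_app_nth)
          then show ?thesis using ih pair[OF s(2)] by (simp add: compl_append compl_Cons o_assoc)
        qed
      qed
    qed
  qed
  show ?thesis using main[of "length fs"] len
  proof -
    have "length fs = 0 \<or> length fs - 1 \<notin> T"
    proof (cases "length fs")
      case (Suc l)
      have "l \<notin> T" using Tin[of l] Suc by auto
      then show ?thesis using Suc by simp
    qed simp
    then show ?thesis using main[of "length fs"] len by simp
  qed
qed

lemma comp_move:
  assumes "bij a" "bij b" "bij c" "bij d" "a \<circ> b = c \<circ> d"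
  shows "inv c \<circ> a = d \<circ> inv b"
proof -
  have "inv c \<circ> a = inv c \<circ> a \<circ> (b \<circ> inv b)" using assms(2) by (simp add: bij_comp_inv)
  also have "\<dots> = inv c \<circ> (a \<circ> b) \<circ> inv b" by (simp add: o_assoc)
  also have "\<dots> = (inv c \<circ> c) \<circ> d \<circ> inv b" using assms(5) by (simp add: o_assoc)
  also have "\<dots> = d \<circ> inv b" using assms(3) by (simp add: bij_inv_comp)
  finally show ?thesis .
qed

lemma Kforms:
  assumes bq: "is_biquandle \<alpha> \<beta>" and r: "r = \<beta> v u" and w: "w = \<alpha> u v"
  shows "\<beta> r \<circ> \<beta> v = \<beta> w \<circ> \<beta> u \<and> inv (\<beta> w) \<circ> \<beta> r = \<beta> u \<circ> inv (\<beta> v) \<and>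
         inv (\<beta> u) \<circ> inv (\<beta> w) = inv (\<beta> v) \<circ> inv (\<beta> r) \<and> \<beta> v \<circ> inv (\<beta> u) = inv (\<beta> r) \<circ> \<beta> w"
proof -
  have bij: "bij (\<beta> a)" for a using bq unfolding is_biquandle_def by blast
  have bij': "bij (inv (\<beta> a))" for a using bij by (simp add: bij_imp_bij_inv)
  have "\<beta> (\<beta> v u) \<circ> \<beta> v = \<beta> (\<alpha> u v) \<circ> \<beta> u" using bq unfolding is_biquandle_def by blast
  then have F1: "\<beta> r \<circ> \<beta> v = \<beta> w \<circ> \<beta> u" using r w by simp
  have F2: "inv (\<beta> w) \<circ> \<beta> r = \<beta> u \<circ> inv (\<beta> v)" by (rule comp_move[OF bij bij bij bij F1])
  have F3: "inv (\<beta> u) \<circ> inv (\<beta> w) = inv (\<beta> v) \<circ> inv (\<beta> r)" by (rule comp_move[OF bij' bij bij bij' F2])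
  have F4: "inv (inv (\<beta> v)) \<circ> inv (\<beta> u) = inv (\<beta> r) \<circ> inv (inv (\<beta> w))" by (rule comp_move[OF bij' bij' bij' bij' F3])
  then have F4': "\<beta> v \<circ> inv (\<beta> u) = inv (\<beta> r) \<circ> \<beta> w" using bij by (simp add: inv_inv_eq)
  show ?thesis using F1 F2 F3 F4' by blast
qed



definition KF :: "('x \<Rightarrow> 'x \<Rightarrow> 'x) \<Rightarrow> 'x \<Rightarrow> 'x \<Rightarrow> 'x \<Rightarrow> 'x \<Rightarrow> bool" where
  "KF \<beta> u v w r \<longleftrightarrow> (\<beta> r \<circ> \<beta> v = \<beta> w \<circ> \<beta> u \<and> inv (\<beta> w) \<circ> \<beta> r = \<beta> u \<circ> inv (\<beta> v) \<and>
         inv (\<beta> u) \<circ> inv (\<beta> w) = inv (\<beta> v) \<circ> inv (\<beta> r) \<and> \<beta> v \<circ> inv (\<beta> u) = inv (\<beta> r) \<circ> \<beta> w)"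

lemma Kcol:
  assumes bq: "is_biquandle \<alpha> \<beta>"
    and h: "if s then cp1 = \<beta> cq1 cp \<and> cq = \<alpha> cp cq1 else cp = \<beta> cq cp1 \<and> cq1 = \<alpha> cp1 cq"
  shows "if s then KF \<beta> cp cq1 cq cp1 else KF \<beta> cp1 cq cq1 cp"
proof (cases s)
  case True
  have a: "cp1 = \<beta> cq1 cp" "cq = \<alpha> cp cq1" using h True by simp_all
  have "KF \<beta> cp cq1 cq cp1" unfolding KF_def by (rule Kforms[OF bq a])
  then show ?thesis using True by simp
next
  case False
  have a: "cp = \<beta> cq cp1" "cq1 = \<alpha> cp1 cq" using h False by simp_all
  have "KF \<beta> cp1 cq cq1 cp" unfolding KF_def by (rule Kforms[OF bq a])
  then show ?thesis using False by simp
qed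



lemma R3_case:
  assumes bq: "is_biquandle \<alpha> \<beta>" and wf: "wf_diag P" "wf_diag P'"
    and col: "coloring \<alpha> \<beta> P sg C" and col': "coloring \<alpha> \<beta> P' sg' C'"
    and R: "R3_move (P, sg, C) (P', sg', C')"
  shows "blw \<beta> P' sg' C' = blw \<beta> P sg C"
proof -
  obtain t m b x y z where
    l: "Suc t < length P" "Suc m < length P" "Suc b < length P"
    and dj: "{t, Suc t} \<inter> {m, Suc m} = {}" "{t, Suc t} \<inter> {b, Suc b} = {}" "{m, Suc m} \<inter> {b, Suc b} = {}"
    and xyz: "x \<noteq> y" "x \<noteq> z" "y \<noteq> z"
    and sT0: "{P ! t, P ! Suc t} = {(x, True), (y, True)}"
    and sM0: "{P ! m, P ! Suc m} = {(x, False), (z, True)}"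
    and sB0: "{P ! b, P ! Suc b} = {(y, False), (z, False)}"
    and sgn: "sgn_int (sg x) * sgn_int (P ! t = (x, True)) * sgn_int (P ! m = (x, False)) =
              sgn_int (sg y) * sgn_int (P ! t = (x, True)) * sgn_int (P ! b = (y, False))"
             "sgn_int (sg y) * sgn_int (P ! t = (x, True)) * sgn_int (P ! b = (y, False)) =
              sgn_int (sg z) * sgn_int (P ! m = (x, False)) * sgn_int (P ! b = (y, False))"
    and len': "length P' = length P"
    and P'k: "\<forall>k < length P. P' ! k = (if k \<in> {t, m, b} then P ! Suc k
                                    else if 0 < k \<and> k - 1 \<in> {t, m, b} then P ! (k - 1)
                                    else P ! k)"
    and sa: "sgn_agree P' sg sg'"
    and C'k: "\<forall>k \<le> length P. \<not> inside {t, m, b} k \<longrightarrow> C' ! k = C ! k"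
    using R unfolding R3_move_def Let_def prod.case by (elim exE conjE) (rule that; assumption)

  have d: "distinct P" "distinct P'" using wf by (simp_all add: wf_distinct)
  define T where "T = {t, m, b}"
  define sT where "sT = (P ! t = (x, True))"
  define sM where "sM = (P ! m = (x, False))"
  define sB where "sB = (P ! b = (y, False))"
  have hT: "P ! t = (if sT then (x, True) else (y, True))" "P ! Suc t = (if sT then (y, True) else (x, True))"
    using sT0 xyz unfolding sT_def by (auto simp: doubleton_eq_iff)
  have hM: "P ! m = (if sM then (x, False) else (z, True))" "P ! Suc m = (if sM then (z, True) else (x, False))"
    using sM0 xyz unfolding sM_def by (auto simp: doubleton_eq_iff)
  have hB: "P ! b = (if sB then (y, False) else (z, False))" "P ! Suc b = (if sB then (z, False) else (y, False))"
    using sB0 xyz unfolding sB_def by (auto simp: doubleton_eq_iff)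
  have ne: "t \<noteq> m" "t \<noteq> Suc m" "Suc t \<noteq> m" "Suc t \<noteq> Suc m" "t \<noteq> b" "t \<noteq> Suc b" "Suc t \<noteq> b" "Suc t \<noteq> Suc b"
    "m \<noteq> b" "m \<noteq> Suc b" "Suc m \<noteq> b" "Suc m \<noteq> Suc b" using dj by auto
  have h'T: "P' ! t = P ! Suc t" "P' ! Suc t = P ! t" using P'k l ne by auto
  have h'M: "P' ! m = P ! Suc m" "P' ! Suc m = P ! m" using P'k l ne by auto
  have h'B: "P' ! b = P ! Suc b" "P' ! Suc b = P ! b" using P'k l ne by auto
  have sgy: "sg y = (sg x = (sM = sB))" and sgz: "sg z = (sg y = (sT = sM))"
    using sgn unfolding sT_def[symmetric] sM_def[symmetric] sB_def[symmetric]
    by (cases sT; cases sM; cases sB; cases "sg x"; cases "sg y"; cases "sg z"; simp add: sgn_int_def)+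
  define xT where "xT = (if sT then t else Suc t)"
  define xT' where "xT' = (if sT then Suc t else t)"
  define yT where "yT = (if sT then Suc t else t)"
  define yT' where "yT' = (if sT then t else Suc t)"
  define xM where "xM = (if sM then m else Suc m)"
  define xM' where "xM' = (if sM then Suc m else m)"
  define zM where "zM = (if sM then Suc m else m)"
  define zM' where "zM' = (if sM then m else Suc m)"
  define yB where "yB = (if sB then b else Suc b)"
  define yB' where "yB' = (if sB then Suc b else b)"
  define zB where "zB = (if sB then Suc b else b)"
  define zB' where "zB' = (if sB then b else Suc b)"
  have pxT: "P ! xT = (x, True)" unfolding xT_def using hT by (cases sT) simp_all
  have pxT': "P' ! xT' = (x, True)" unfolding xT'_def using hT h'T by (cases sT) simp_all
  have bxT: "xT < length P" "xT' < length P'" unfolding xT_def xT'_def using l len' by simp_all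
  have pyT: "P ! yT = (y, True)" unfolding yT_def using hT by (cases sT) simp_all
  have pyT': "P' ! yT' = (y, True)" unfolding yT'_def using hT h'T by (cases sT) simp_all
  have byT: "yT < length P" "yT' < length P'" unfolding yT_def yT'_def using l len' by simp_all
  have pxM: "P ! xM = (x, False)" unfolding xM_def using hM by (cases sM) simp_all
  have pxM': "P' ! xM' = (x, False)" unfolding xM'_def using hM h'M by (cases sM) simp_all
  have bxM: "xM < length P" "xM' < length P'" unfolding xM_def xM'_def using l len' by simp_all
  have pzM: "P ! zM = (z, True)" unfolding zM_def using hM by (cases sM) simp_all
  have pzM': "P' ! zM' = (z, True)" unfolding zM'_def using hM h'M by (cases sM) simp_all
  have bzM: "zM < length P" "zM' < length P'" unfolding zM_def zM'_def using l len' by simp_all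
  have pyB: "P ! yB = (y, False)" unfolding yB_def using hB by (cases sB) simp_all
  have pyB': "P' ! yB' = (y, False)" unfolding yB'_def using hB h'B by (cases sB) simp_all
  have byB: "yB < length P" "yB' < length P'" unfolding yB_def yB'_def using l len' by simp_all
  have pzB: "P ! zB = (z, False)" unfolding zB_def using hB by (cases sB) simp_all
  have pzB': "P' ! zB' = (z, False)" unfolding zB'_def using hB h'B by (cases sB) simp_all
  have bzB: "zB < length P" "zB' < length P'" unfolding zB_def zB'_def using l len' by simp_all
  have mxT: "pass_map \<beta> P sg C xT = (if sg x then inv (\<beta> (C ! xM)) else \<beta> (C ! Suc xM))"
    using pass_map_eq[OF d(1) bxT(1) pxT bxM(1) pxM bxT(1) pxT, where \<beta>=\<beta> and sg=sg and C=C] by simp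
  have mxT': "pass_map \<beta> P' sg' C' xT' = (if sg' x then inv (\<beta> (C' ! xM')) else \<beta> (C' ! Suc xM'))"
    using pass_map_eq[OF d(2) bxT(2) pxT' bxM(2) pxM' bxT(2) pxT', where \<beta>=\<beta> and sg=sg' and C=C'] by simp
  have myT: "pass_map \<beta> P sg C yT = (if sg y then inv (\<beta> (C ! yB)) else \<beta> (C ! Suc yB))"
    using pass_map_eq[OF d(1) byT(1) pyT byB(1) pyB byT(1) pyT, where \<beta>=\<beta> and sg=sg and C=C] by simp
  have myT': "pass_map \<beta> P' sg' C' yT' = (if sg' y then inv (\<beta> (C' ! yB')) else \<beta> (C' ! Suc yB'))"
    using pass_map_eq[OF d(2) byT(2) pyT' byB(2) pyB' byT(2) pyT', where \<beta>=\<beta> and sg=sg' and C=C'] by simp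
  have mxM: "pass_map \<beta> P sg C xM = (if sg x then \<beta> (C ! Suc xT) else inv (\<beta> (C ! xT)))"
    using pass_map_eq[OF d(1) bxM(1) pxM bxM(1) pxM bxT(1) pxT, where \<beta>=\<beta> and sg=sg and C=C] by simp
  have mxM': "pass_map \<beta> P' sg' C' xM' = (if sg' x then \<beta> (C' ! Suc xT') else inv (\<beta> (C' ! xT')))"
    using pass_map_eq[OF d(2) bxM(2) pxM' bxM(2) pxM' bxT(2) pxT', where \<beta>=\<beta> and sg=sg' and C=C'] by simp
  have mzM: "pass_map \<beta> P sg C zM = (if sg z then inv (\<beta> (C ! zB)) else \<beta> (C ! Suc zB))"
    using pass_map_eq[OF d(1) bzM(1) pzM bzB(1) pzB bzM(1) pzM, where \<beta>=\<beta> and sg=sg and C=C] by simp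
  have mzM': "pass_map \<beta> P' sg' C' zM' = (if sg' z then inv (\<beta> (C' ! zB')) else \<beta> (C' ! Suc zB'))"
    using pass_map_eq[OF d(2) bzM(2) pzM' bzB(2) pzB' bzM(2) pzM', where \<beta>=\<beta> and sg=sg' and C=C'] by simp
  have myB: "pass_map \<beta> P sg C yB = (if sg y then \<beta> (C ! Suc yT) else inv (\<beta> (C ! yT)))"
    using pass_map_eq[OF d(1) byB(1) pyB byB(1) pyB byT(1) pyT, where \<beta>=\<beta> and sg=sg and C=C] by simp
  have myB': "pass_map \<beta> P' sg' C' yB' = (if sg' y then \<beta> (C' ! Suc yT') else inv (\<beta> (C' ! yT')))"
    using pass_map_eq[OF d(2) byB(2) pyB' byB(2) pyB' byT(2) pyT', where \<beta>=\<beta> and sg=sg' and C=C'] by simp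
  have mzB: "pass_map \<beta> P sg C zB = (if sg z then \<beta> (C ! Suc zM) else inv (\<beta> (C ! zM)))"
    using pass_map_eq[OF d(1) bzB(1) pzB bzB(1) pzB bzM(1) pzM, where \<beta>=\<beta> and sg=sg and C=C] by simp
  have mzB': "pass_map \<beta> P' sg' C' zB' = (if sg' z then \<beta> (C' ! Suc zM') else inv (\<beta> (C' ! zM')))"
    using pass_map_eq[OF d(2) bzB(2) pzB' bzB(2) pzB' bzM(2) pzM', where \<beta>=\<beta> and sg=sg' and C=C'] by simp
  have Kx: "if sg x then KF \<beta> (C ! xM) (C ! Suc xT) (C ! xT) (C ! Suc xM) else KF \<beta> (C ! Suc xM) (C ! xT) (C ! Suc xT) (C ! xM)"
    by (rule Kcol[OF bq col_at[OF col bxM(1) bxT(1) pxM pxT]])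
  have Kx': "if sg' x then KF \<beta> (C' ! xM') (C' ! Suc xT') (C' ! xT') (C' ! Suc xM') else KF \<beta> (C' ! Suc xM') (C' ! xT') (C' ! Suc xT') (C' ! xM')"
    by (rule Kcol[OF bq col_at[OF col' bxM(2) bxT(2) pxM' pxT']])
  have Ky: "if sg y then KF \<beta> (C ! yB) (C ! Suc yT) (C ! yT) (C ! Suc yB) else KF \<beta> (C ! Suc yB) (C ! yT) (C ! Suc yT) (C ! yB)"
    by (rule Kcol[OF bq col_at[OF col byB(1) byT(1) pyB pyT]])
  have Ky': "if sg' y then KF \<beta> (C' ! yB') (C' ! Suc yT') (C' ! yT') (C' ! Suc yB') else KF \<beta> (C' ! Suc yB') (C' ! yT') (C' ! Suc yT') (C' ! yB')"
    by (rule Kcol[OF bq col_at[OF col' byB(2) byT(2) pyB' pyT']])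
  have Kz: "if sg z then KF \<beta> (C ! zB) (C ! Suc zM) (C ! zM) (C ! Suc zB) else KF \<beta> (C ! Suc zB) (C ! zM) (C ! Suc zM) (C ! zB)"
    by (rule Kcol[OF bq col_at[OF col bzB(1) bzM(1) pzB pzM]])
  have Kz': "if sg' z then KF \<beta> (C' ! zB') (C' ! Suc zM') (C' ! zM') (C' ! Suc zB') else KF \<beta> (C' ! Suc zB') (C' ! zM') (C' ! Suc zM') (C' ! zB')"
    by (rule Kcol[OF bq col_at[OF col' bzB(2) bzM(2) pzB' pzM']])

  have C'f: "C' ! t = C ! t" "C' ! Suc (Suc t) = C ! Suc (Suc t)" "C' ! m = C ! m" "C' ! Suc (Suc m) = C ! Suc (Suc m)"
     "C' ! b = C ! b" "C' ! Suc (Suc b) = C ! Suc (Suc b)"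
  proof -
    have "\<not> inside {t, m, b} k" if "k \<in> {t, Suc (Suc t), m, Suc (Suc m), b, Suc (Suc b)}" for k
      using that ne by (auto simp: inside_def)
    moreover have "k \<le> length P" if "k \<in> {t, Suc (Suc t), m, Suc (Suc m), b, Suc (Suc b)}" for k
      using that l by auto
    ultimately have "C' ! k = C ! k" if "k \<in> {t, Suc (Suc t), m, Suc (Suc m), b, Suc (Suc b)}" for k
      using that C'k by blast
    then show "C' ! t = C ! t" "C' ! Suc (Suc t) = C ! Suc (Suc t)" "C' ! m = C ! m" "C' ! Suc (Suc m) = C ! Suc (Suc m)"
     "C' ! b = C ! b" "C' ! Suc (Suc b) = C ! Suc (Suc b)" by simp_all
  qed
  have inP': "(x, True) \<in> set P'" "(y, True) \<in> set P'" "(z, True) \<in> set P'"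
    using pxT' pyT' pzM' bxT(2) byT(2) bzM(2) by (metis nth_mem)+
  have sg'f: "sg' x = sg x" "sg' y = sg y" "sg' z = sg z"
    using sa inP' unfolding sgn_agree_def by (metis fst_conv image_eqI)+
  have fT: "pass_map \<beta> P sg C t = (if sT then pass_map \<beta> P sg C xT else pass_map \<beta> P sg C yT)"
           "pass_map \<beta> P sg C (Suc t) = (if sT then pass_map \<beta> P sg C yT else pass_map \<beta> P sg C xT)"
           "pass_map \<beta> P' sg' C' t = (if sT then pass_map \<beta> P' sg' C' yT' else pass_map \<beta> P' sg' C' xT')"
           "pass_map \<beta> P' sg' C' (Suc t) = (if sT then pass_map \<beta> P' sg' C' xT' else pass_map \<beta> P' sg' C' yT')"
    by (simp_all add: xT_def yT_def xT'_def yT'_def)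
  have fM: "pass_map \<beta> P sg C m = (if sM then pass_map \<beta> P sg C xM else pass_map \<beta> P sg C zM)"
           "pass_map \<beta> P sg C (Suc m) = (if sM then pass_map \<beta> P sg C zM else pass_map \<beta> P sg C xM)"
           "pass_map \<beta> P' sg' C' m = (if sM then pass_map \<beta> P' sg' C' zM' else pass_map \<beta> P' sg' C' xM')"
           "pass_map \<beta> P' sg' C' (Suc m) = (if sM then pass_map \<beta> P' sg' C' xM' else pass_map \<beta> P' sg' C' zM')"
    by (simp_all add: xM_def zM_def xM'_def zM'_def)
  have fB: "pass_map \<beta> P sg C b = (if sB then pass_map \<beta> P sg C yB else pass_map \<beta> P sg C zB)"
           "pass_map \<beta> P sg C (Suc b) = (if sB then pass_map \<beta> P sg C zB else pass_map \<beta> P sg C yB)"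
           "pass_map \<beta> P' sg' C' b = (if sB then pass_map \<beta> P' sg' C' zB' else pass_map \<beta> P' sg' C' yB')"
           "pass_map \<beta> P' sg' C' (Suc b) = (if sB then pass_map \<beta> P' sg' C' yB' else pass_map \<beta> P' sg' C' zB')"
    by (simp_all add: yB_def zB_def yB'_def zB'_def)
  note defs = xT_def yT_def xM_def zM_def yB_def zB_def xT'_def yT'_def xM'_def zM'_def yB'_def zB'_def
  have segT: "pass_map \<beta> P' sg' C' (Suc t) \<circ> pass_map \<beta> P' sg' C' t = pass_map \<beta> P sg C (Suc t) \<circ> pass_map \<beta> P sg C t"
    unfolding fT mxT myT mxT' myT' using Kx Ky Kz Kx' Ky' Kz' C'f sg'f sgy sgz
    by (cases sT; cases sM; cases sB; cases "sg x") (simp_all add: KF_def defs)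
  have segM: "pass_map \<beta> P' sg' C' (Suc m) \<circ> pass_map \<beta> P' sg' C' m = pass_map \<beta> P sg C (Suc m) \<circ> pass_map \<beta> P sg C m"
    unfolding fM mxM mzM mxM' mzM' using Kx Ky Kz Kx' Ky' Kz' C'f sg'f sgy sgz
    by (cases sT; cases sM; cases sB; cases "sg x") (simp_all add: KF_def defs)
  have segB: "pass_map \<beta> P' sg' C' (Suc b) \<circ> pass_map \<beta> P' sg' C' b = pass_map \<beta> P sg C (Suc b) \<circ> pass_map \<beta> P sg C b"
    unfolding fB myB mzB myB' mzB' using Kx Ky Kz Kx' Ky' Kz' C'f sg'f sgy sgz
    by (cases sT; cases sM; cases sB; cases "sg x") (simp_all add: KF_def defs)
  define S6 where "S6 = {t, Suc t, m, Suc m, b, Suc b}"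
  have six: "P ! q \<in> {(x, True), (y, True), (x, False), (z, True), (y, False), (z, False)}" 
    "P' ! q \<in> {(x, True), (y, True), (x, False), (z, True), (y, False), (z, False)}" if "q \<in> S6" for q
    using that hT hM hB h'T h'M h'B unfolding S6_def by (auto split: if_splits)
  have outside: "pass_map \<beta> P' sg' C' k = pass_map \<beta> P sg C k"
    if k: "k < length P" "k \<notin> T" "k = 0 \<or> k - 1 \<notin> T" for k
  proof -
    have kS: "k \<notin> S6" using k unfolding S6_def T_def by auto
    have Pk: "P' ! k = P ! k" using P'k k unfolding T_def by auto
    have "P ! k \<notin> {(x, True), (y, True), (x, False), (z, True), (y, False), (z, False)}"
    proof
      assume "P ! k \<in> {(x, True), (y, True), (x, False), (z, True), (y, False), (z, False)}"
      then have "P ! k \<in> {P ! xT, P ! yT, P ! xM, P ! zM, P ! yB, P ! zB}"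
        using pxT pyT pxM pzM pyB pzB by auto
      moreover have "{xT, yT, xM, zM, yB, zB} \<subseteq> S6" unfolding defs S6_def by auto
      ultimately show False using kS d(1) k(1) bxT byT bxM bzM byB bzB
        by (auto simp: nth_eq_iff_index_eq)
    qed
    then have c0: "fst (P ! k) \<notin> {x, y, z}" by (cases "P ! k") auto
    show ?thesis
    proof (rule pm_transfer[OF wf _ k(1) Pk])
      show "k < length P'" using k len' by simp
      show "\<exists>p<length P. P ! p = (fst (P ! k), bo) \<and> C' ! p' = C ! p \<and> C' ! Suc p' = C ! Suc p"
        if "p' < length P'" "P' ! p' = (fst (P ! k), bo)" for p' bo
      proof -
        have "p' \<notin> S6" using six(2)[of p'] that c0 by auto
        then have a: "p' \<notin> T" "p' = 0 \<or> p' - 1 \<notin> T" unfolding S6_def T_def by auto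
        have "P ! p' = P' ! p'" using P'k that(1) len' a unfolding T_def by auto
        moreover have "C' ! p' = C ! p'" using C'k that(1) len' a unfolding T_def inside_def by auto
        moreover have "C' ! Suc p' = C ! Suc p'" using C'k that(1) len' a unfolding T_def inside_def by auto
        ultimately show ?thesis using that len' by auto
      qed
      have "fst (P ! k) \<in> fst ` set P'" using Pk k len' by (metis image_eqI nth_mem)
      then show "sg' (fst (P ! k)) = sg (fst (P ! k))" using sa unfolding sgn_agree_def by blast
    qed
  qed
  have "compl (map (pass_map \<beta> P' sg' C') [0..<length P']) = compl (map (pass_map \<beta> P sg C) [0..<length P])"
  proof (rule compl_pairs_eq[where T = T])
    show "length (map (pass_map \<beta> P' sg' C') [0..<length P']) = length (map (pass_map \<beta> P sg C) [0..<length P])"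
      using len' by simp
    show "Suc s < length (map (pass_map \<beta> P sg C) [0..<length P])" if "s \<in> T" for s
      using that l unfolding T_def by auto
    show "Suc s \<notin> T" if "s \<in> T" for s using that ne unfolding T_def by auto
    show "map (pass_map \<beta> P' sg' C') [0..<length P'] ! k = map (pass_map \<beta> P sg C) [0..<length P] ! k"
      if "k < length (map (pass_map \<beta> P sg C) [0..<length P])" "k \<notin> T" "k = 0 \<or> k - 1 \<notin> T" for k
      using outside[of k] that len' by simp
    show "map (pass_map \<beta> P' sg' C') [0..<length P'] ! Suc s \<circ> map (pass_map \<beta> P' sg' C') [0..<length P'] ! s =
          map (pass_map \<beta> P sg C) [0..<length P] ! Suc s \<circ> map (pass_map \<beta> P sg C) [0..<length P] ! s"
      if "s \<in> T" for s
    proof -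
      have "Suc s < length P" using that l unfolding T_def by auto
      then show ?thesis using that segT segM segB len' unfolding T_def by (auto simp del: upt_Suc)
    qed
  qed
  then show ?thesis unfolding blw_compl .
qed


theorem mainTheorem3:
  fixes \<alpha> \<beta> :: "'x::finite \<Rightarrow> 'x \<Rightarrow> 'x"
    and P P' :: "pass list" and sg sg' :: "nat \<Rightarrow> bool" and C C' :: "'x list"
  assumes "is_biquandle \<alpha> \<beta>"
    and "wf_diag P" and "wf_diag P'"
    and "coloring \<alpha> \<beta> P sg C" and "coloring \<alpha> \<beta> P' sg' C'"
    and "reid_move (P, sg, C) (P', sg', C')"
  shows "blw \<beta> P' sg' C' = blw \<beta> P sg C"
proof -
  have bijb: "\<forall>b. bij (\<beta> b)" using assms(1) unfolding is_biquandle_def by blast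
  have "R1_reduce (P, sg, C) (P', sg', C') \<or> R1_reduce (P', sg', C') (P, sg, C) \<or>
        R2_reduce (P, sg, C) (P', sg', C') \<or> R2_reduce (P', sg', C') (P, sg, C) \<or>
        R3_move (P, sg, C) (P', sg', C') \<or> R3_move (P', sg', C') (P, sg, C)"
    using assms(6) unfolding reid_move_def .
  then show ?thesis
  proof (elim disjE)
    assume R: "R1_reduce (P, sg, C) (P', sg', C')"
    show ?thesis by (rule R1_case[OF bijb assms(2) assms(3) R])
  next
    assume R: "R1_reduce (P', sg', C') (P, sg, C)"
    show ?thesis by (rule R1_case[OF bijb assms(3) assms(2) R, symmetric])
  next
    assume R: "R2_reduce (P, sg, C) (P', sg', C')"
    show ?thesis by (rule R2_case[OF bijb assms(2) assms(3) R])
  next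
    assume R: "R2_reduce (P', sg', C') (P, sg, C)"
    show ?thesis by (rule R2_case[OF bijb assms(3) assms(2) R, symmetric])
  next
    assume R: "R3_move (P, sg, C) (P', sg', C')"
    show ?thesis by (rule R3_case[OF assms(1) assms(2) assms(3) assms(4) assms(5) R])
  next
    assume R: "R3_move (P', sg', C') (P, sg, C)"
    show ?thesis by (rule R3_case[OF assms(1) assms(3) assms(2) assms(5) assms(4) R, symmetric])
  qed
qed

end
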